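(* Let $(C,S)$ be a partially shaded tree, where $C$ is the support tree of a vertex of a non-degenerate transportation polytope $\mathrm{TP}(u,v)$. If some well-connected component of $(C,S)$ contains no open node, then $(C,S)$ is fully shaded.
   Context: Let $N_1,N_2\ge1$, $u\in\mathbb{R}_{>0}^{N_1}$, $v\in\mathbb{R}_{>0}^{N_2}$ with $\sum_iu_i=\sum_jv_j$, and $\mathrm{TP}(u,v)=\{y\in\mathbb{R}^{N_1\times N_2}: \sum_j y_{ij}=u_i\ \forall i,\ \sum_i y_{ij}=v_j\ \forall j,\ y\ge 0\}$. View supply nodes $\sigma^1,\dots,\sigma^{N_1}$ and demand nodes $\delta^1,\dots,\delta^{N_2}$ as the two sides of the complete bipartite graph $K_{N_1,N_2}$; the support graph of $y$ consists of the edges $\{\sigma^i,\delta^j\}$ with $y_{ij}>0$. $\mathrm{TP}(u,v)$ is non-degenerate if there are no nonempty proper subsets $I\subsetneq\{1,\dots,N_1\}$, $J\subsetneq\{1,\dots,N_2\}$ with $\sum_{i\in I}u_i=\sum_{j\in J}v_j$; then the support graph of each vertex is a spanning tree of $K_{N_1,N_2}$, which determines the vertex; these are called trees. Fix a tree $F$ (the final tree). A partially shaded tree is a pair $(C,S)$ where $C$ is a tree and $S\subseteq C\cap F$ is the set of shaded edges (other edges of $C$ are unshaded); it is fully shaded if $S=C$. A supply node $\sigma$ is well-connected in $(C,S)$ if every edge of $F$ incident to $\sigma$ lies in $S$; otherwise it is open. A demand node is well-connected if it is not incident to an unshaded edge of $C$; otherwise it is open. A well-connected edge is a shaded edge incident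 to at least one well-connected node. The well-connected components are the connected components of the graph on all $N_1+N_2$ nodes whose edges are the well-connected edges (in particular a node incident to no well-connected edge forms a component by itself). *)

theory Defs
  imports Complex_Main
begin

text \<open>Supply nodes are indexed by i < N1, demand nodes by j < N2. A point of
  R^(N1 x N2) is represented as a function y :: nat => nat => real that vanishes
  outside the index range. An edge {sigma^i, delta^j} is the pair (i, j).\<close>

definition TP :: "nat \<Rightarrow> nat \<Rightarrow> (nat \<Rightarrow> real) \<Rightarrow> (nat \<Rightarrow> real) \<Rightarrow> (nat \<Rightarrow> nat \<Rightarrow> real) set" where
  "TP N1 N2 u v = {y. (\<forall>i<N1. (\<Sum>j<N2. y i j) = u i)
                    \<and> (\<forall>j<N2. (\<Sum>i<N1. y i j) = v j)
                    \<and> (\<forall>i j. 0 \<le> y i j)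
                    \<and> (\<forall>i j. \<not> (i < N1 \<and> j < N2) \<longrightarrow> y i j = 0)}"

definition non_degenerate :: "nat \<Rightarrow> nat \<Rightarrow> (nat \<Rightarrow> real) \<Rightarrow> (nat \<Rightarrow> real) \<Rightarrow> bool" where
  "non_degenerate N1 N2 u v \<longleftrightarrow>
     \<not> (\<exists>I J. I \<noteq> {} \<and> I \<subset> {..<N1} \<and> J \<noteq> {} \<and> J \<subset> {..<N2}
              \<and> (\<Sum>i\<in>I. u i) = (\<Sum>j\<in>J. v j))"

definition is_vertex :: "(nat \<Rightarrow> nat \<Rightarrow> real) set \<Rightarrow> (nat \<Rightarrow> nat \<Rightarrow> real) \<Rightarrow> bool" where
  "is_vertex P y \<longleftrightarrow> y \<in> P \<and>
     (\<forall>a\<in>P. \<forall>b\<in>P. \<forall>t::real. 0 < t \<and> t < 1 \<and> y = (\<lambda>i j. t * a i j + (1 - t) * b i j) \<longrightarrow> a = b)"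

definition support :: "nat \<Rightarrow> nat \<Rightarrow> (nat \<Rightarrow> nat \<Rightarrow> real) \<Rightarrow> (nat \<times> nat) set" where
  "support N1 N2 y = {(i, j). i < N1 \<and> j < N2 \<and> 0 < y i j}"

definition is_tree :: "nat \<Rightarrow> nat \<Rightarrow> (nat \<Rightarrow> real) \<Rightarrow> (nat \<Rightarrow> real) \<Rightarrow> (nat \<times> nat) set \<Rightarrow> bool" where
  "is_tree N1 N2 u v C \<longleftrightarrow> (\<exists>y. is_vertex (TP N1 N2 u v) y \<and> C = support N1 N2 y)"

text \<open>Nodes: Inl i = supply node sigma^i, Inr j = demand node delta^j.\<close>
definition nodes :: "nat \<Rightarrow> nat \<Rightarrow> (nat + nat) set" where
  "nodes N1 N2 = Inl ` {..<N1} \<union> Inr ` {..<N2}"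

definition supply_wc :: "(nat \<times> nat) set \<Rightarrow> (nat \<times> nat) set \<Rightarrow> nat \<Rightarrow> bool" where
  "supply_wc F S i \<longleftrightarrow> (\<forall>j. (i, j) \<in> F \<longrightarrow> (i, j) \<in> S)"

definition demand_wc :: "(nat \<times> nat) set \<Rightarrow> (nat \<times> nat) set \<Rightarrow> nat \<Rightarrow> bool" where
  "demand_wc C S j \<longleftrightarrow> (\<forall>i. (i, j) \<in> C \<longrightarrow> (i, j) \<in> S)"

definition node_wc :: "(nat \<times> nat) set \<Rightarrow> (nat \<times> nat) set \<Rightarrow> (nat \<times> nat) set \<Rightarrow> nat + nat \<Rightarrow> bool" where
  "node_wc F C S x = (case x of Inl i \<Rightarrow> supply_wc F S i | Inr j \<Rightarrow> demand_wc C S j)"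

abbreviation node_open :: "(nat \<times> nat) set \<Rightarrow> (nat \<times> nat) set \<Rightarrow> (nat \<times> nat) set \<Rightarrow> nat + nat \<Rightarrow> bool" where
  "node_open F C S x \<equiv> \<not> node_wc F C S x"

definition wc_edges :: "(nat \<times> nat) set \<Rightarrow> (nat \<times> nat) set \<Rightarrow> (nat \<times> nat) set \<Rightarrow> (nat \<times> nat) set" where
  "wc_edges F C S = {(i, j). (i, j) \<in> S \<and> (supply_wc F S i \<or> demand_wc C S j)}"

definition wc_adj :: "(nat \<times> nat) set \<Rightarrow> (nat \<times> nat) set \<Rightarrow> (nat \<times> nat) set \<Rightarrow> ((nat + nat) \<times> (nat + nat)) set" where
  "wc_adj F C S = {(Inl i, Inr j) | i j. (i, j) \<in> wc_edges F C S}
                \<union> {(Inr j, Inl i) | i j. (i, j) \<in> wc_edges F C S}"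

definition wc_component :: "nat \<Rightarrow> nat \<Rightarrow> (nat \<times> nat) set \<Rightarrow> (nat \<times> nat) set \<Rightarrow> (nat \<times> nat) set \<Rightarrow> nat + nat \<Rightarrow> (nat + nat) set" where
  "wc_component N1 N2 F C S x = {z \<in> nodes N1 N2. (x, z) \<in> (wc_adj F C S)\<^sup>*}"

definition wc_components :: "nat \<Rightarrow> nat \<Rightarrow> (nat \<times> nat) set \<Rightarrow> (nat \<times> nat) set \<Rightarrow> (nat \<times> nat) set \<Rightarrow> (nat + nat) set set" where
  "wc_components N1 N2 F C S = wc_component N1 N2 F C S ` nodes N1 N2"

end

theory Submission
  imports Defs
begin

lemma sum_lt_all:
  fixes f :: "nat \<Rightarrow> real"
  assumes "A \<subseteq> {..<n}" "A \<noteq> {..<n}" "\<forall>i<n. 0 < f i"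
  shows "sum f A < sum f {..<n}"
proof -
  have "sum f {..<n} = sum f A + sum f ({..<n} - A)"
    using assms(1) by (metis add.commute finite_lessThan sum.subset_diff)
  moreover have "({..<n} - A) \<noteq> {}" using assms(1,2) by blast
  hence "sum f ({..<n} - A) > 0" using assms(3)
    by (intro sum_pos) auto
  ultimately show ?thesis by simp
qed

lemma sum_pos_ne:
  fixes f :: "nat \<Rightarrow> real"
  assumes "A \<subseteq> {..<n}" "A \<noteq> {}" "\<forall>i<n. 0 < f i"
  shows "sum f A > 0"
  using assms by (intro sum_pos) (auto intro: finite_subset)

theorem lemma2:
  fixes N1 N2 :: nat and u v :: "nat \<Rightarrow> real" and F C S :: "(nat \<times> nat) set"
  assumes "N1 \<ge> 1" and "N2 \<ge> 1"
    and "\<forall>i<N1. 0 < u i" and "\<forall>j<N2. 0 < v j"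
    and "(\<Sum>i<N1. u i) = (\<Sum>j<N2. v j)"
    and "non_degenerate N1 N2 u v"
    and "is_tree N1 N2 u v F"
    and "is_tree N1 N2 u v C"
    and "S \<subseteq> C \<inter> F"
    and "\<exists>K\<in>wc_components N1 N2 F C S. \<forall>x\<in>K. \<not> node_open F C S x"
  shows "S = C"
proof -
  obtain yF where yF: "yF \<in> TP N1 N2 u v" "F = support N1 N2 yF"
    using assms(7) unfolding is_tree_def is_vertex_def by blast
  obtain yC where yC: "yC \<in> TP N1 N2 u v" "C = support N1 N2 yC"
    using assms(8) unfolding is_tree_def is_vertex_def by blast
  obtain x where x: "x \<in> nodes N1 N2" and wcK: "\<forall>z\<in>wc_component N1 N2 F C S x. node_wc F C S z"
    using assms(10) unfolding wc_components_def by blast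
  define K where "K = wc_component N1 N2 F C S x"
  have xK: "x \<in> K" using x unfolding K_def wc_component_def by simp
  have step: "w \<in> K" if "z \<in> K" "(z, w) \<in> wc_adj F C S" "w \<in> nodes N1 N2" for z w
    using that unfolding K_def wc_component_def by (auto intro: rtrancl_into_rtrancl)
  define I where "I = {i. i < N1 \<and> Inl i \<in> K}"
  define J where "J = {j. j < N2 \<and> Inr j \<in> K}"
  have IJsub: "I \<subseteq> {..<N1}" "J \<subseteq> {..<N2}" unfolding I_def J_def by auto
  have a: "j \<in> J" if "i \<in> I" "j < N2" "yF i j > 0" for i j
  proof -
    have iK: "Inl i \<in> K" "i < N1" using that I_def by auto
    have "supply_wc F S i" using wcK iK unfolding K_def node_wc_def by force
    moreover have "(i, j) \<in> F" using yF that iK unfolding support_def by auto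
    ultimately have "(i, j) \<in> S" "supply_wc F S i" unfolding supply_wc_def by auto
    hence "(Inl i, Inr j) \<in> wc_adj F C S" unfolding wc_adj_def wc_edges_def by auto
    moreover have "Inr j \<in> nodes N1 N2" using that unfolding nodes_def by auto
    ultimately show ?thesis using step iK that J_def by auto
  qed
  have b: "i \<in> I" if "j \<in> J" "i < N1" "yC i j > 0" for i j
  proof -
    have jK: "Inr j \<in> K" "j < N2" using that J_def by auto
    have "demand_wc C S j" using wcK jK unfolding K_def node_wc_def by force
    moreover have "(i, j) \<in> C" using yC that jK unfolding support_def by auto
    ultimately have "(i, j) \<in> S" "demand_wc C S j" unfolding demand_wc_def by auto
    hence "(Inr j, Inl i) \<in> wc_adj F C S" unfolding wc_adj_def wc_edges_def by auto
    moreover have "Inl i \<in> nodes N1 N2" using that unfolding nodes_def by auto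
    ultimately show ?thesis using step jK that I_def by auto
  qed
  have TPF: "\<forall>i<N1. (\<Sum>j<N2. yF i j) = u i" "\<forall>j<N2. (\<Sum>i<N1. yF i j) = v j" "\<forall>i j. 0 \<le> yF i j"
    using yF(1) unfolding TP_def by auto
  have TPC: "\<forall>i<N1. (\<Sum>j<N2. yC i j) = u i" "\<forall>j<N2. (\<Sum>i<N1. yC i j) = v j" "\<forall>i j. 0 \<le> yC i j"
    using yC(1) unfolding TP_def by auto
  have le1: "sum u I \<le> sum v J"
  proof -
    have "sum u I = (\<Sum>i\<in>I. \<Sum>j<N2. yF i j)" using TPF IJsub by (intro sum.cong) auto
    also have "\<dots> = (\<Sum>i\<in>I. \<Sum>j\<in>J. yF i j)"
    proof (rule sum.cong[OF refl])
      fix i assume i: "i \<in> I"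
      have "(\<Sum>j<N2. yF i j) = (\<Sum>j\<in>J. yF i j) + (\<Sum>j\<in>{..<N2} - J. yF i j)"
        using IJsub by (metis add.commute finite_lessThan sum.subset_diff)
      moreover have "(\<Sum>j\<in>{..<N2} - J. yF i j) = 0"
      proof (intro sum.neutral ballI)
        fix j assume "j \<in> {..<N2} - J"
        thus "yF i j = 0" using a[OF i] TPF(3)[rule_format, of i j] by force
      qed
      ultimately show "(\<Sum>j<N2. yF i j) = (\<Sum>j\<in>J. yF i j)" by simp
    qed
    also have "\<dots> = (\<Sum>j\<in>J. \<Sum>i\<in>I. yF i j)" by (rule sum.swap)
    also have "\<dots> \<le> (\<Sum>j\<in>J. \<Sum>i<N1. yF i j)"
      proof (rule sum_mono)
      fix j assume "j \<in> J"
      show "(\<Sum>i\<in>I. yF i j) \<le> (\<Sum>i<N1. yF i j)"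
        by (rule sum_mono2) (use IJsub TPF(3) in auto)
    qed
    also have "\<dots> = sum v J" using TPF IJsub by (intro sum.cong) auto
    finally show ?thesis .
  qed
  have le2: "sum v J \<le> sum u I"
  proof -
    have "sum v J = (\<Sum>j\<in>J. \<Sum>i<N1. yC i j)" using TPC IJsub by (intro sum.cong) auto
    also have "\<dots> = (\<Sum>j\<in>J. \<Sum>i\<in>I. yC i j)"
    proof (rule sum.cong[OF refl])
      fix j assume j: "j \<in> J"
      have "(\<Sum>i<N1. yC i j) = (\<Sum>i\<in>I. yC i j) + (\<Sum>i\<in>{..<N1} - I. yC i j)"
        using IJsub by (metis add.commute finite_lessThan sum.subset_diff)
      moreover have "(\<Sum>i\<in>{..<N1} - I. yC i j) = 0"
      proof (intro sum.neutral ballI)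
        fix i assume "i \<in> {..<N1} - I"
        thus "yC i j = 0" using b[OF j] TPC(3)[rule_format, of i j] by force
      qed
      ultimately show "(\<Sum>i<N1. yC i j) = (\<Sum>i\<in>I. yC i j)" by simp
    qed
    also have "\<dots> = (\<Sum>i\<in>I. \<Sum>j\<in>J. yC i j)" by (rule sum.swap)
    also have "\<dots> \<le> (\<Sum>i\<in>I. \<Sum>j<N2. yC i j)"
      proof (rule sum_mono)
      fix i assume "i \<in> I"
      show "(\<Sum>j\<in>J. yC i j) \<le> (\<Sum>j<N2. yC i j)"
        by (rule sum_mono2) (use IJsub TPC(3) in auto)
    qed
    also have "\<dots> = sum u I" using TPC IJsub by (intro sum.cong) auto
    finally show ?thesis .
  qed
  have eq: "sum u I = sum v J" using le1 le2 by simp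
  have ne: "I \<noteq> {} \<or> J \<noteq> {}"
    using x xK unfolding nodes_def I_def J_def by auto
  have Iall: "I = {..<N1}" and Jall: "J = {..<N2}"
  proof -
    have "I \<noteq> {}"
    proof
      assume "I = {}"
      hence "J \<noteq> {}" using ne by simp
      hence "sum v J > 0" using sum_pos_ne IJsub assms(4) by blast
      thus False using eq \<open>I = {}\<close> by simp
    qed
    have "J \<noteq> {}"
    proof
      assume "J = {}"
      hence "sum u I > 0" using sum_pos_ne IJsub assms(3) \<open>I \<noteq> {}\<close> by blast
      thus False using eq \<open>J = {}\<close> by simp
    qed
    have c: "I = {..<N1} \<or> J = {..<N2}"
      using assms(6) \<open>I \<noteq> {}\<close> \<open>J \<noteq> {}\<close> IJsub eq unfolding non_degenerate_def by blast
    show "I = {..<N1}"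
    proof (rule ccontr)
      assume "I \<noteq> {..<N1}"
      hence "J = {..<N2}" using c by simp
      have "sum u I < sum u {..<N1}" using sum_lt_all IJsub \<open>I \<noteq> {..<N1}\<close> assms(3) by blast
      thus False using eq assms(5) \<open>J = {..<N2}\<close> by simp
    qed
    show "J = {..<N2}"
    proof (rule ccontr)
      assume "J \<noteq> {..<N2}"
      hence "I = {..<N1}" using c by simp
      have "sum v J < sum v {..<N2}" using sum_lt_all IJsub \<open>J \<noteq> {..<N2}\<close> assms(4) by blast
      thus False using eq assms(5) \<open>I = {..<N1}\<close> by simp
    qed
  qed
  have "C \<subseteq> S"
  proof
    fix e assume e: "e \<in> C"
    obtain i j where ij: "e = (i, j)" by (cases e)
    have "j < N2" using e ij yC unfolding support_def by auto
    hence "Inr j \<in> K" using Jall J_def by auto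
    hence "demand_wc C S j" using wcK unfolding K_def node_wc_def by force
    thus "e \<in> S" using e ij unfolding demand_wc_def by auto
  qed
  thus ?thesis using assms(9) by blast
qed

end
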